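(* Let $n_0\in C^1(\Omega,\mathbb S^2)$ with $n_0\ne-e_3$, and suppose $n_0$ is conformal. Let $\rho_0=-B_0^{-1}b_0$ with $B_0,b_0$ as in the context. Then $\rho_0\cdot e_1=\rho_0\cdot e_2=0$ (so $R_{n_0}V_{\rho_0}R_{n_0}^t$ is a multiple of $n_0\otimes n_0-\frac13I$, i.e. no biaxiality at this order), and $$\int_\Omega\tfrac12B_0\rho_0\cdot\rho_0+b_0\cdot\rho_0=-\frac{3s_+^2}{\nu}\int_\Omega|\nabla n_0|^4.$$
   Context: $a,b,c>0$, $s_+=\frac{b^2+\sqrt{b^4+24a^2c^2}}{4c^2}$, $\mu=b^2s_+$, $\nu=\frac13b^2s_++2a^2$, $B_0=\mathrm{diag}(\mu,\mu,\nu)$. $F_1=\frac1{\sqrt2}(e_1\otimes e_1-e_2\otimes e_2)$, $F_2=\frac1{\sqrt2}(e_1\otimes e_2+e_2\otimes e_1)$, $F_3=\sqrt{\frac32}(e_3\otimes e_3-\frac13I)$; $V_\rho=\sum_{j=1}^3\rho_jF_j$. For $n\ne-e_3$, $R_n=I+[e_3\times n]_\times+\frac{[e_3\times n]_\times^2}{1+n\cdot e_3}$ with $[\omega]_\times v=\omega\times v$. $\nabla n\otimes\nabla n=\sum_{i=1}^2\partial_in\otimes\partial_in$, and $b_0\cdot e_j=-2s_+(\nabla n_0\otimes\nabla n_0):(R_{n_0}F_jR_{n_0}^t)$ for $j=1,2$, $b_0\cdot e_3=\sqrt6\,s_+|\nabla n_0|^2$, with $A:B=\mathrm{tr}(A^tB)$.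 $n$ is conformal if $\partial_2n=\sigma\,n\times\partial_1n$ with $\sigma\equiv\pm1$ constant; $\Omega\subset\mathbb R^2$ bounded and $|\nabla n_0|\in L^4(\Omega)$. *)

theory Defs
  imports "HOL-Analysis.Analysis" "HOL-Analysis.Cross3"
begin

unbundle no cross3_syntax

definition ev3 :: "3 \<Rightarrow> real^3" where "ev3 j = axis j 1"

definition tens :: "real^3 \<Rightarrow> real^3 \<Rightarrow> real^3^3" where
  "tens u v = (\<chi> i j. u$i * v$j)"

definition frob :: "real^3^3 \<Rightarrow> real^3^3 \<Rightarrow> real" where
  "frob A B = trace (transpose A ** B)"

definition minv :: "real^3^3 \<Rightarrow> real^3^3" where
  "minv A = (SOME B. A ** B = mat 1 \<and> B ** A = mat 1)"

definition Fm :: "3 \<Rightarrow> real^3^3" where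
  "Fm j = (if j = 1 then (1 / sqrt 2) *\<^sub>R (tens (ev3 1) (ev3 1) - tens (ev3 2) (ev3 2))
           else if j = 2 then (1 / sqrt 2) *\<^sub>R (tens (ev3 1) (ev3 2) + tens (ev3 2) (ev3 1))
           else sqrt (3/2) *\<^sub>R (tens (ev3 3) (ev3 3) - (1/3) *\<^sub>R mat 1))"

definition Vrho :: "real^3 \<Rightarrow> real^3^3" where
  "Vrho \<rho> = (\<Sum>j\<in>UNIV. (\<rho>$j) *\<^sub>R Fm j)"

definition skew :: "real^3 \<Rightarrow> real^3^3" where
  "skew w = (\<chi> i j. (cross3 w (axis j 1))$i)"

definition Rn :: "real^3 \<Rightarrow> real^3^3" where
  "Rn n = mat 1 + skew (cross3 (ev3 3) n)
          + (1 / (1 + n \<bullet> ev3 3)) *\<^sub>R (skew (cross3 (ev3 3) n) ** skew (cross3 (ev3 3) n))"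

definition pd :: "(real^2 \<Rightarrow> real^3) \<Rightarrow> 2 \<Rightarrow> real^2 \<Rightarrow> real^3" where
  "pd n i x = frechet_derivative n (at x) (axis i 1)"

definition gradtens :: "(real^2 \<Rightarrow> real^3) \<Rightarrow> real^2 \<Rightarrow> real^3^3" where
  "gradtens n x = (\<Sum>i\<in>UNIV. tens (pd n i x) (pd n i x))"

definition gradsq :: "(real^2 \<Rightarrow> real^3) \<Rightarrow> real^2 \<Rightarrow> real" where
  "gradsq n x = (\<Sum>i\<in>UNIV. (norm (pd n i x))\<^sup>2)"

definition splus :: "real \<Rightarrow> real \<Rightarrow> real \<Rightarrow> real" where
  "splus a b c = (b^2 + sqrt (b^4 + 24 * a^2 * c^2)) / (4 * c^2)"

definition muc :: "real \<Rightarrow> real \<Rightarrow> real \<Rightarrow> real" where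
  "muc a b c = b^2 * splus a b c"

definition nuc :: "real \<Rightarrow> real \<Rightarrow> real \<Rightarrow> real" where
  "nuc a b c = (1/3) * b^2 * splus a b c + 2 * a^2"

definition B0 :: "real \<Rightarrow> real \<Rightarrow> real \<Rightarrow> real^3^3" where
  "B0 a b c = (\<chi> i j. if i = j then (if i = 3 then nuc a b c else muc a b c) else 0)"

definition b0 :: "real \<Rightarrow> real \<Rightarrow> real \<Rightarrow> (real^2 \<Rightarrow> real^3) \<Rightarrow> real^2 \<Rightarrow> real^3" where
  "b0 a b c n x = (\<chi> j. if j = 3 then sqrt 6 * splus a b c * gradsq n x
      else - 2 * splus a b c * frob (gradtens n x) (Rn (n x) ** Fm j ** transpose (Rn (n x))))"

definition rho0 :: "real \<Rightarrow> real \<Rightarrow> real \<Rightarrow> (real^2 \<Rightarrow> real^3) \<Rightarrow> real^2 \<Rightarrow> real^3" where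
  "rho0 a b c n x = - (minv (B0 a b c) *v b0 a b c n x)"

definition conformal :: "(real^2 \<Rightarrow> real^3) \<Rightarrow> (real^2) set \<Rightarrow> bool" where
  "conformal n \<Omega> \<longleftrightarrow> (\<exists>\<sigma>::real. (\<sigma> = 1 \<or> \<sigma> = -1) \<and>
      (\<forall>x\<in>\<Omega>. pd n 2 x = \<sigma> *\<^sub>R cross3 (n x) (pd n 1 x)))"

end

theory Submission
  imports Defs
begin

definition RR :: "real \<Rightarrow> real \<Rightarrow> real \<Rightarrow> real^3^3" where
 "RR x y k = (\<chi> i j. if i = 1 then (if j = 1 then 1 - x*x*k else if j = 2 then -x*y*k else x)
   else if i = 2 then (if j = 1 then -x*y*k else if j = 2 then 1 - y*y*k else y)
   else (if j = 1 then -x else if j = 2 then -y else 1 - (x*x+y*y)*k))"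

definition G1 :: "real^3^3" where "G1 = tens (ev3 1) (ev3 1) - tens (ev3 2) (ev3 2)"
definition G2 :: "real^3^3" where "G2 = tens (ev3 1) (ev3 2) + tens (ev3 2) (ev3 1)"

lemma B1:
  fixes n :: "real^3"
  assumes "n$1^2 + n$2^2 + n$3^2 = 1" "k * (1 + n$3) = 1"
  shows "frob (mat 1 - tens n n) (RR (n$1) (n$2) k ** G1 ** transpose (RR (n$1) (n$2) k)) = 0"
    "frob (mat 1 - tens n n) (RR (n$1) (n$2) k ** G2 ** transpose (RR (n$1) (n$2) k)) = 0"
proof -
  obtain x y z where n: "n$1 = x" "n$2 = y" "n$3 = z" by blast
  have h1: "x*x+y*y+z*z = 1" "k*(1+z) = 1" using assms(1,2) n by (auto simp: power2_eq_square)
  show "frob (mat 1 - tens n n) (RR (n$1) (n$2) k ** G1 ** transpose (RR (n$1) (n$2) k)) = 0"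
    apply (simp add: n frob_def trace_def RR_def G1_def matrix_matrix_mult_def transpose_def
        tens_def ev3_def sum_3 axis_def mat_def)
    using h1 by algebra
  show "frob (mat 1 - tens n n) (RR (n$1) (n$2) k ** G2 ** transpose (RR (n$1) (n$2) k)) = 0"
    apply (simp add: n frob_def trace_def RR_def G2_def matrix_matrix_mult_def transpose_def
        tens_def ev3_def sum_3 axis_def mat_def)
    using h1 by algebra
qed

lemma Rn_RR: "Rn n = RR (n$1) (n$2) (1 / (1 + n$3))"
  unfolding Rn_def RR_def
  by (simp add: vec_eq_iff forall_3 ev3_def skew_def cross3_def matrix_matrix_mult_def sum_3 axis_def
      mat_def inner_vec_def vector_def algebra_simps)

lemma Fm12: "Fm 1 = (1 / sqrt 2) *\<^sub>R G1" "Fm 2 = (1 / sqrt 2) *\<^sub>R G2"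
  by (simp_all add: Fm_def G1_def G2_def)

lemma frob_scale: "frob (c *\<^sub>R A) (M ** (d *\<^sub>R G) ** N) = c * d * frob A (M ** G ** N)"
  by (simp add: frob_def trace_def matrix_scalar_ac scalar_matrix_assoc[symmetric] transpose_def
      matrix_matrix_mult_def sum_distrib_left sum_3 algebra_simps)

lemma gradA:
  fixes n p :: "real^3" and s :: real
  assumes "n \<bullet> n = 1" "n \<bullet> p = 0" "s * s = 1"
  shows "tens p p + tens (s *\<^sub>R cross3 n p) (s *\<^sub>R cross3 n p) = (p \<bullet> p) *\<^sub>R (mat 1 - tens n n)"
proof -
  obtain x y z p1 p2 p3 where n: "n$1 = x" "n$2 = y" "n$3 = z" "p$1 = p1" "p$2 = p2" "p$3 = p3" by blast
  have h: "x * x + y * y + z * z = 1" "x * p1 + y * p2 + z * p3 = 0" "s * s = 1" using assms n by (auto simp: inner_vec_def sum_3)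
  show ?thesis
    apply (simp add: vec_eq_iff forall_3 tens_def cross3_def inner_vec_def sum_3 mat_def n)
    using h by algebra
qed

lemma unit_orth:
  fixes n :: "real^2 \<Rightarrow> real^3"
  assumes "open S" "x \<in> S" "\<forall>y\<in>S. norm (n y) = 1" "n differentiable (at x)"
  shows "n x \<bullet> frechet_derivative n (at x) h = 0"
proof -
  let ?D = "frechet_derivative n (at x)"
  have d: "(n has_derivative ?D) (at x)" using assms(4) frechet_derivative_works by blast
  have d2: "((\<lambda>y. n y \<bullet> n y) has_derivative (\<lambda>h. n x \<bullet> ?D h + ?D h \<bullet> n x)) (at x)"
    using has_derivative_inner[OF d d] by simp
  have eq: "\<And>y. y \<in> S \<Longrightarrow> n y \<bullet> n y = 1"
    using assms(3) by (metis norm_eq_1)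
  have d3: "((\<lambda>y. 1::real) has_derivative (\<lambda>h. n x \<bullet> ?D h + ?D h \<bullet> n x)) (at x)"
    using has_derivative_transform_within_open[OF d2 assms(1,2) eq] by simp
  have "(\<lambda>h. n x \<bullet> ?D h + ?D h \<bullet> n x) = (\<lambda>h. 0)"
    using has_derivative_unique[OF d3 has_derivative_const] .
  then have "n x \<bullet> ?D h + ?D h \<bullet> n x = 0" by metis
  then show ?thesis by (simp add: inner_commute)
qed

lemma b0_12:
  fixes n0 :: "real^2 \<Rightarrow> real^3"
  assumes "open S" "x \<in> S" "\<forall>y\<in>S. norm (n0 y) = 1" "n0 differentiable (at x)"
    "n0 x \<noteq> - ev3 3" "pd n0 2 x = s *\<^sub>R cross3 (n0 x) (pd n0 1 x)" "s = 1 \<or> s = -1"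
  shows "b0 a b c n0 x $ 1 = 0 \<and> b0 a b c n0 x $ 2 = 0"
proof -
  let ?n = "n0 x" and ?p = "pd n0 1 x"
  have nn: "?n \<bullet> ?n = 1" using assms(2,3) by (metis norm_eq_1)
  have np: "?n \<bullet> ?p = 0" unfolding pd_def using unit_orth[OF assms(1-4)] .
  have ss: "s * s = 1" using assms(7) by auto
  have gt: "gradtens n0 x = (?p \<bullet> ?p) *\<^sub>R (mat 1 - tens ?n ?n)"
    unfolding gradtens_def sum_2 assms(6) using gradA[OF nn np ss] by simp
  have sq: "?n$1^2 + ?n$2^2 + ?n$3^2 = 1" using nn by (simp add: inner_vec_def sum_3 power2_eq_square)
  have z: "1 + ?n$3 \<noteq> 0"
  proof
    assume h: "1 + ?n$3 = 0"
    then have "?n$3 = -1" by simp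
    then have "?n$1^2 + ?n$2^2 = 0" using sq by simp
    then have "?n$1 = 0" "?n$2 = 0" by (simp_all add: sum_power2_eq_zero_iff)
    then have "?n = - ev3 3" using h by (simp add: vec_eq_iff forall_3 ev3_def axis_def)
    then show False using assms(5) by simp
  qed
  have k: "(1 / (1 + ?n$3)) * (1 + ?n$3) = 1" using z by simp
  note B = B1[OF sq k]
  show ?thesis
    by (simp add: b0_def gt Rn_RR Fm12 frob_scale B)
qed

lemma splus_pos: "b > 0 \<Longrightarrow> c > 0 \<Longrightarrow> splus a b c > 0"
  unfolding splus_def by (intro divide_pos_pos add_pos_nonneg) auto

lemma minv_B0:
  assumes "b > 0" "c > 0"
  shows "minv (B0 a b c) = (\<chi> i j. if i = j then (if i = 3 then 1 / nuc a b c else 1 / muc a b c) else 0)"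
    (is "_ = ?D")
proof -
  have mu: "muc a b c > 0" unfolding muc_def using splus_pos[OF assms] assms by simp
  have nu: "nuc a b c > 0" unfolding nuc_def using splus_pos[OF assms] assms
    by (intro add_pos_nonneg) auto
  have l: "?D ** B0 a b c = mat 1"
    using mu nu unfolding vec_eq_iff forall_3 B0_def matrix_matrix_mult_def sum_3 mat_def by simp
  have r: "B0 a b c ** ?D = mat 1"
    using mu nu unfolding vec_eq_iff forall_3 B0_def matrix_matrix_mult_def sum_3 mat_def by simp
  have u: "B = ?D" if "B0 a b c ** B = mat 1 \<and> B ** B0 a b c = mat 1" for B
  proof -
    have "?D ** (B0 a b c ** B) = ?D" using that by simp
    then show "B = ?D" by (simp add: matrix_mul_assoc l)
  qed
  show ?thesis unfolding minv_def
    apply (rule some_equality)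
     apply (rule conjI[OF r l])
    apply (erule u)
    done
qed

theorem mainTheorem9:
  fixes a b c :: real and \<Omega> :: "(real^2) set" and n0 :: "real^2 \<Rightarrow> real^3"
  assumes "a > 0" "b > 0" "c > 0"
    and "open \<Omega>" "bounded \<Omega>"
    and "\<forall>x\<in>\<Omega>. n0 differentiable (at x)"
    and "\<forall>i. continuous_on \<Omega> (pd n0 i)"
    and "\<forall>x\<in>\<Omega>. norm (n0 x) = 1"
    and "\<forall>x\<in>\<Omega>. n0 x \<noteq> - ev3 3"
    and "conformal n0 \<Omega>"
    and "set_integrable lebesgue \<Omega> (\<lambda>x. (gradsq n0 x)\<^sup>2)"
  shows "(\<forall>x\<in>\<Omega>. rho0 a b c n0 x \<bullet> ev3 1 = 0 \<and> rho0 a b c n0 x \<bullet> ev3 2 = 0)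
    \<and> (LINT x:\<Omega>|lebesgue. (1/2) * ((B0 a b c *v rho0 a b c n0 x) \<bullet> rho0 a b c n0 x)
                             + b0 a b c n0 x \<bullet> rho0 a b c n0 x)
      = - (3 * (splus a b c)^2 / nuc a b c) * (LINT x:\<Omega>|lebesgue. (gradsq n0 x)\<^sup>2)"
proof -
  obtain s where s: "s = 1 \<or> s = -1" "\<forall>x\<in>\<Omega>. pd n0 2 x = s *\<^sub>R cross3 (n0 x) (pd n0 1 x)"
    using assms(10) unfolding conformal_def by blast
  have nu: "nuc a b c > 0" unfolding nuc_def using splus_pos[OF assms(2,3)] assms
    by (intro add_pos_nonneg) auto
  have b12: "b0 a b c n0 x $ 1 = 0 \<and> b0 a b c n0 x $ 2 = 0" if "x \<in> \<Omega>" for x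
    using b0_12[OF assms(4) that assms(8)] assms(6,9) s that by blast
  have rho: "rho0 a b c n0 x = (\<chi> i. if i = 3 then - (b0 a b c n0 x $ 3 / nuc a b c) else 0)"
    if "x \<in> \<Omega>" for x
    using b12[OF that]
    by (simp add: rho0_def minv_B0[OF assms(2,3)] vec_eq_iff forall_3 matrix_vector_mult_def sum_3)
  have b3: "b0 a b c n0 x $ 3 = sqrt 6 * splus a b c * gradsq n0 x" for x
    by (simp add: b0_def)
  have pt: "(1/2) * ((B0 a b c *v rho0 a b c n0 x) \<bullet> rho0 a b c n0 x) + b0 a b c n0 x \<bullet> rho0 a b c n0 x
      = - (3 * (splus a b c)^2 / nuc a b c) * (gradsq n0 x)\<^sup>2" if "x \<in> \<Omega>" for x
  proof -
    have "(1/2) * ((B0 a b c *v rho0 a b c n0 x) \<bullet> rho0 a b c n0 x) + b0 a b c n0 x \<bullet> rho0 a b c n0 x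
       = - ((b0 a b c n0 x $ 3)^2 / (2 * nuc a b c))"
      using nu by (simp add: rho[OF that] B0_def matrix_vector_mult_def inner_vec_def sum_3
          field_simps power2_eq_square)
    also have "\<dots> = - (3 * (splus a b c)^2 / nuc a b c) * (gradsq n0 x)\<^sup>2"
      using nu by (simp add: b3 power_mult_distrib field_simps)
    finally show ?thesis .
  qed
  have meas: "\<Omega> \<in> sets lebesgue" using assms(4) by simp
  show ?thesis
  proof
    show "\<forall>x\<in>\<Omega>. rho0 a b c n0 x \<bullet> ev3 1 = 0 \<and> rho0 a b c n0 x \<bullet> ev3 2 = 0"
      using rho by (simp add: ev3_def inner_axis)
    show "(LINT x:\<Omega>|lebesgue. (1/2) * ((B0 a b c *v rho0 a b c n0 x) \<bullet> rho0 a b c n0 x)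
                             + b0 a b c n0 x \<bullet> rho0 a b c n0 x)
      = - (3 * (splus a b c)^2 / nuc a b c) * (LINT x:\<Omega>|lebesgue. (gradsq n0 x)\<^sup>2)"
      (is "?L = ?C * ?R")
    proof -
      have "?L = (LINT x:\<Omega>|lebesgue. ?C * (gradsq n0 x)\<^sup>2)"
        by (rule set_lebesgue_integral_cong[OF meas]) (use pt in blast)
      also have "\<dots> = ?C * ?R" by (rule set_integral_mult_right)
      finally show ?thesis .
    qed
  qed
qed
end
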